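(* Let $k\ge1$ and $B>0$ be constants and let $F=(F_L,F_R)$ be as defined below. Then $F$ is monotonically nondecreasing on $[0,1]^2$: if $(\alpha_L,\alpha_R),(\alpha_L',\alpha_R')\in[0,1]^2$ with $\alpha_L\le\alpha_L'$ and $\alpha_R\le\alpha_R'$, then $F_L(\alpha_L,\alpha_R)\le F_L(\alpha_L',\alpha_R')$ and $F_R(\alpha_L,\alpha_R)\le F_R(\alpha_L',\alpha_R')$. In particular, at every point with $\sqrt{\alpha_L\alpha_R}B>1$, one has $1-(1-\theta_L)(1-\theta_R)B^2\alpha_L\alpha_R>0$, where $(\theta_L,\theta_R)$ is as in the definition of $F$.
   Context: The map $F$: for $(\alpha_L,\alpha_R)\in[0,1]^2$, if $\sqrt{\alpha_L\alpha_R}\,B\le1$ set $(\theta_L,\theta_R)=(0,0)$; otherwise let $(\theta_L,\theta_R)$ be the unique solution with $\theta_L,\theta_R>0$ of $\exp(-B\sqrt k\,\alpha_R\theta_R)=1-\theta_L$ and $\exp(-\frac{B}{\sqrt k}\alpha_L\theta_L)=1-\theta_R$. Then $F(\alpha_L,\alpha_R)=\big(\tfrac12(1+\theta_L\alpha_L),\tfrac12(1+\theta_R\alpha_R)\big)$. *)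

theory Defs
  imports "HOL-Analysis.Analysis"
begin

definition theta_eqs :: "real \<Rightarrow> real \<Rightarrow> real \<Rightarrow> real \<Rightarrow> real \<Rightarrow> real \<Rightarrow> bool" where
  "theta_eqs k B aL aR tL tR \<longleftrightarrow>
     tL > 0 \<and> tR > 0 \<and>
     exp (- B * sqrt k * aR * tR) = 1 - tL \<and>
     exp (- (B / sqrt k) * aL * tL) = 1 - tR"

definition theta :: "real \<Rightarrow> real \<Rightarrow> real \<Rightarrow> real \<Rightarrow> real \<times> real" where
  "theta k B aL aR =
     (if sqrt (aL * aR) * B \<le> 1 then (0, 0)
      else (THE p. theta_eqs k B aL aR (fst p) (snd p)))"

definition F_map :: "real \<Rightarrow> real \<Rightarrow> real \<Rightarrow> real \<Rightarrow> real \<times> real" where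
  "F_map k B aL aR =
     (let (tL, tR) = theta k B aL aR in ((1 + tL * aL) / 2, (1 + tR * aR) / 2))"

end

theory Submission
  imports Defs
begin

definition q :: "real \<Rightarrow> real" where "q t = (1 - exp (-t)) / t"
definition G :: "real \<Rightarrow> real \<Rightarrow> real \<Rightarrow> real" where
  "G a b x = 1 - exp (-(a * (1 - exp (-(b * x)))))"
definition R :: "real \<Rightarrow> real \<Rightarrow> real \<Rightarrow> real" where
  "R a b x = a * b * q (a * (1 - exp (-(b * x)))) * q (b * x)"

lemma exp_ineq: fixes t :: real assumes "t > 0" shows "t * exp (-t) < 1 - exp (-t)"
proof -
  have "1 + t < exp t" using exp_minus_greater[of "-t"] assms by simp
  then have "(1 + t) * exp (-t) < exp t * exp (-t)" by simp
  then show ?thesis by (simp add: exp_minus_inverse algebra_simps)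
qed

lemma q_pos: "(t::real) > 0 \<Longrightarrow> q t > 0"
  unfolding q_def by simp

lemma q_gt_exp: "(t::real) > 0 \<Longrightarrow> exp (-t) < q t"
  unfolding q_def using exp_ineq[of t] by (simp add: field_simps)

lemma q_deriv: "(t::real) \<noteq> 0 \<Longrightarrow> (q has_real_derivative ((exp (-t) * t - (1 - exp (-t))) / t^2)) (at t)"
  unfolding q_def[abs_def]
  by (auto intro!: derivative_eq_intros simp: power2_eq_square field_simps)

lemma q_dec: fixes s t :: real assumes "0 < s" "s < t" shows "q t < q s"
proof -
  have "q s > q t"
  proof (rule DERIV_neg_imp_decreasing[OF assms(2)])
    fix x assume "s \<le> x" "x \<le> t"
    then have x: "x > 0" using assms by simp
    show "\<exists>y. DERIV q x :> y \<and> y < 0"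
      using q_deriv[of x] x exp_ineq[of x]
      by (intro exI[of _ "(exp (-x) * x - (1 - exp (-x))) / x^2"]) (auto simp: divide_neg_pos mult.commute)
  qed
  then show ?thesis .
qed

lemma G_eq: fixes a b x :: real assumes "a > 0" "b > 0" "x > 0" shows "G a b x = x * R a b x"
proof -
  have h: "1 - exp (-(b*x)) > 0" using assms by simp
  show ?thesis unfolding G_def R_def q_def using assms h
    by (simp add: field_simps)
qed

lemma R_dec: fixes a b x y :: real assumes "a > 0" "b > 0" "0 < x" "x < y" shows "R a b y < R a b x"
proof -
  have hx: "1 - exp (-(b*x)) > 0" using assms by simp
  have hxy: "1 - exp (-(b*x)) < 1 - exp (-(b*y))" using assms by simp
  have 1: "q (a * (1 - exp (-(b * y)))) < q (a * (1 - exp (-(b * x))))"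
    using assms hx hxy by (intro q_dec) auto
  have 2: "q (b*y) < q (b*x)" using assms by (intro q_dec) auto
  have p1: "q (a * (1 - exp (-(b * y)))) > 0" using assms hx hxy by (intro q_pos) auto
  have p2: "q (b*y) > 0" using assms by (intro q_pos) auto
  have "q (a * (1 - exp (-(b * y)))) * q (b*y) < q (a * (1 - exp (-(b * x)))) * q (b*x)"
    using 1 2 p1 p2 by (intro mult_strict_mono) auto
  then show ?thesis unfolding R_def using assms
    by (simp add: mult.assoc)
qed


lemma fixed_exists:
  fixes a b :: real assumes "a > 0" "b > 0" "a * b > 1"
  shows "\<exists>x>0. x < 1 \<and> G a b x = x"
proof -
  define P where "P x = G a b x - x" for x
  have d: "DERIV P 0 :> a * b - 1"
    unfolding P_def[abs_def] G_def
    by (auto intro!: derivative_eq_intros)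
  obtain d where d0: "d > 0" and dd: "\<And>h. h > 0 \<Longrightarrow> h < d \<Longrightarrow> P 0 < P (0 + h)"
    using DERIV_pos_inc_right[OF d] assms by auto
  define e where "e = min (d/2) (1/2)"
  have e: "e > 0" "e < d" "e < 1" using d0 by (auto simp: e_def)
  have P0: "P 0 = 0" by (simp add: P_def G_def)
  have Pe: "P e > 0" using dd[of e] e P0 by simp
  have P1: "P 1 < 0" by (simp add: P_def G_def)
  have c: "continuous_on {e..1} P" unfolding P_def[abs_def] G_def
    by (intro continuous_intros)
  obtain x where x: "e \<le> x" "x \<le> 1" "P x = 0"
    using IVT2'[of P 1 0 e, OF _ _ _ c] P1 Pe e by auto
  have "x \<noteq> 1" using x P1 by auto
  then show ?thesis using x e by (intro exI[of _ x]) (auto simp: P_def)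
qed

lemma fixed_R: fixes a b x :: real assumes "a > 0" "b > 0" "x > 0" "G a b x = x"
  shows "R a b x = 1"
  using G_eq[OF assms(1-3)] assms by simp

lemma fixed_unique: fixes a b x y :: real
  assumes "a > 0" "b > 0" "x > 0" "G a b x = x" "y > 0" "G a b y = y"
  shows "x = y"
proof -
  have "R a b x = 1" "R a b y = 1" using fixed_R assms by auto
  then show ?thesis using R_dec[OF assms(1,2,3), of y] R_dec[OF assms(1,2,5), of x]
    by (cases x y rule: linorder_cases) auto
qed

lemma above_fixed: fixes a b x y :: real
  assumes "a > 0" "b > 0" "x > 0" "G a b x = x" "y > x"
  shows "G a b y < y"
proof -
  have "R a b y < 1" using R_dec[OF assms(1,2,3,5)] fixed_R[OF assms(1-4)] by simp
  then show ?thesis using G_eq[OF assms(1,2), of y] assms by simp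
qed

lemma fixed_deriv: fixes a b x :: real
  assumes "a > 0" "b > 0" "x > 0" "G a b x = x"
  shows "a * b * exp (-(b*x)) * exp (-(a * (1 - exp (-(b*x))))) < 1"
proof -
  have h: "1 - exp (-(b*x)) > 0" using assms by simp
  have 1: "exp (-(a * (1 - exp (-(b*x))))) < q (a * (1 - exp (-(b*x))))"
    using h assms by (intro q_gt_exp) auto
  have 2: "exp (-(b*x)) < q (b*x)" using assms by (intro q_gt_exp) auto
  have "exp (-(b*x)) * exp (-(a * (1 - exp (-(b*x))))) < q (b*x) * q (a * (1 - exp (-(b*x))))"
    using 1 2 assms by (intro mult_strict_mono) (auto intro: less_imp_le q_pos)
  then have "a * b * (exp (-(b*x)) * exp (-(a * (1 - exp (-(b*x)))))) < a * b * (q (b*x) * q (a * (1 - exp (-(b*x)))))"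
    using assms by simp
  also have "\<dots> = R a b x" by (simp add: R_def)
  also have "\<dots> = 1" using fixed_R assms by simp
  finally show ?thesis by (simp add: mult.assoc)
qed

lemma fixed_mono: fixes a b a' b' x x' :: real
  assumes "a > 0" "b > 0" "a \<le> a'" "b \<le> b'" "x > 0" "G a b x = x" "x' > 0" "G a' b' x' = x'"
  shows "x \<le> x'"
proof (rule ccontr)
  assume "\<not> x \<le> x'"
  then have "G a' b' x < x" using above_fixed[of a' b' x' x] assms by auto
  moreover have "G a b x \<le> G a' b' x"
  proof -
    have "exp (-(b'*x)) \<le> exp (-(b*x))" using assms by (simp add: mult_right_mono)
    then have "a * (1 - exp (-(b*x))) \<le> a' * (1 - exp (-(b'*x)))"
      using assms by (intro mult_mono) auto
    then show ?thesis unfolding G_def by simp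
  qed
  ultimately show False using assms by simp
qed


lemma theta_nontriv:
  fixes k B aL aR :: real
  assumes "k \<ge> 1" "B > 0" "aL \<ge> 0" "aR \<ge> 0" "sqrt (aL * aR) * B > 1"
  defines "A \<equiv> B * sqrt k * aR" and "C \<equiv> B / sqrt k * aL"
  shows "A > 0 \<and> C > 0 \<and> A * C = B^2 * aL * aR \<and> A * C > 1 \<and>
         fst (theta k B aL aR) > 0 \<and> snd (theta k B aL aR) > 0 \<and>
         1 - fst (theta k B aL aR) = exp (-(A * snd (theta k B aL aR))) \<and>
         1 - snd (theta k B aL aR) = exp (-(C * fst (theta k B aL aR))) \<and>
         G A C (fst (theta k B aL aR)) = fst (theta k B aL aR) \<and>
         G C A (snd (theta k B aL aR)) = snd (theta k B aL aR)"
proof -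
  have sk: "sqrt k > 0" using assms by simp
  have p: "aL * aR > 0"
  proof (rule ccontr)
    assume "\<not> aL * aR > 0"
    then have "aL * aR = 0" using assms mult_nonneg_nonneg[of aL aR] by linarith
    then show False using assms(5) by (cases "aL = 0") simp_all
  qed
  then have aL: "aL > 0" and aR: "aR > 0" using assms by (auto simp: zero_less_mult_iff)
  have "1 < (sqrt (aL * aR) * B)^2" using assms by (simp add: one_less_power)
  also have "\<dots> = B^2 * aL * aR" using p by (simp add: power_mult_distrib)
  finally have gt: "B^2 * aL * aR > 1" .
  have A: "A > 0" and C: "C > 0" using assms aL aR sk by (auto simp: A_def C_def)
  have AC: "A * C = B^2 * aL * aR" using sk by (simp add: A_def C_def power2_eq_square field_simps)
  have eqs: "theta_eqs k B aL aR u v \<longleftrightarrow> u > 0 \<and> v > 0 \<and> 1 - u = exp (-(A * v)) \<and> 1 - v = exp (-(C * u))" for u v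
  proof -
    have e1: "- B * sqrt k * aR * v = -(A * v)" by (simp add: A_def)
    have e2: "- (B / sqrt k) * aL * u = -(C * u)" by (simp add: C_def)
    show ?thesis unfolding theta_eqs_def e1 e2 by auto
  qed
  obtain x where x: "x > 0" "x < 1" "G A C x = x" using fixed_exists[OF A C] AC gt by auto
  define y where "y = 1 - exp (-(C*x))"
  have y: "y > 0" using C x by (simp add: y_def)
  have ex: "theta_eqs k B aL aR x y" unfolding eqs using x y
    by (auto simp: y_def G_def)
  have un: "u = x \<and> v = y" if "theta_eqs k B aL aR u v" for u v
  proof -
    have u: "u > 0" "v > 0" "1 - u = exp (-(A * v))" "1 - v = exp (-(C * u))" using that[unfolded eqs] by auto
    have hv: "1 - exp (-(C * u)) = v" using u(4) by simp
    have "G A C u = 1 - exp (-(A * v))" unfolding G_def hv ..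
    then have "G A C u = u" using u(3) by simp
    then have "u = x" using fixed_unique[OF A C u(1) _ x(1) x(3)] by simp
    then show ?thesis using u(4) unfolding y_def by simp
  qed
  have "\<exists>!p. theta_eqs k B aL aR (fst p) (snd p)"
  proof (rule ex1I[of _ "(x,y)"])
    show "theta_eqs k B aL aR (fst (x,y)) (snd (x,y))" using ex by simp
  next
    fix p assume "theta_eqs k B aL aR (fst p) (snd p)"
    then show "p = (x,y)" using un[of "fst p" "snd p"] by (simp add: prod_eq_iff)
  qed
  from theI'[OF this] have "theta_eqs k B aL aR (fst (theta k B aL aR)) (snd (theta k B aL aR))"
    using assms(5) by (simp add: theta_def not_le)
  then have t: "fst (theta k B aL aR) = x" "snd (theta k B aL aR) = y" using un by auto
  have Gy: "G C A y = y"
  proof -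
    have "1 - x = exp (-(A*y))" using ex[unfolded eqs] by auto
    then have hx: "1 - exp (-(A * y)) = x" by simp
    have "G C A y = 1 - exp (-(C * x))" unfolding G_def hx ..
    then show ?thesis by (simp add: y_def)
  qed
  have "1 - x = exp (-(A*y))" "1 - y = exp (-(C*x))" using ex[unfolded eqs] by auto
  then show ?thesis using A C AC gt t x y Gy by simp
qed


lemma theta_nonneg:
  fixes k B aL aR :: real
  assumes "k \<ge> 1" "B > 0" "aL \<ge> 0" "aR \<ge> 0"
  shows "fst (theta k B aL aR) \<ge> 0 \<and> snd (theta k B aL aR) \<ge> 0"
proof (cases "sqrt (aL * aR) * B \<le> 1")
  case True then show ?thesis by (simp add: theta_def)
next
  case False then show ?thesis using theta_nontriv[OF assms] by (simp add: not_le less_imp_le)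
qed

lemma theta_mono:
  fixes k B aL aR aL' aR' :: real
  assumes "k \<ge> 1" "B > 0" "aL \<ge> 0" "aR \<ge> 0" "aL \<le> aL'" "aR \<le> aR'"
  shows "fst (theta k B aL aR) \<le> fst (theta k B aL' aR') \<and> snd (theta k B aL aR) \<le> snd (theta k B aL' aR')"
proof (cases "sqrt (aL * aR) * B \<le> 1")
  case True
  then show ?thesis using theta_nonneg[OF assms(1,2), of aL' aR'] assms by (simp add: theta_def)
next
  case False
  then have n: "sqrt (aL * aR) * B > 1" by simp
  have "aL * aR \<le> aL' * aR'" using assms by (intro mult_mono) auto
  then have "sqrt (aL * aR) * B \<le> sqrt (aL' * aR') * B" using assms by simp
  then have n': "sqrt (aL' * aR') * B > 1" using n by simp
  have sk: "sqrt k > 0" using assms by simp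
  have l1: "B * sqrt k * aR \<le> B * sqrt k * aR'" using assms sk by simp
  have l2: "B / sqrt k * aL \<le> B / sqrt k * aL'" using assms sk by (intro mult_left_mono) auto
  note T = theta_nontriv[OF assms(1-4) n]
  have a': "aL' \<ge> 0" "aR' \<ge> 0" using assms by auto
  note T' = theta_nontriv[OF assms(1,2) a' n']
  have "fst (theta k B aL aR) \<le> fst (theta k B aL' aR')"
    using fixed_mono[OF _ _ l1 l2] T T' by blast
  moreover have "snd (theta k B aL aR) \<le> snd (theta k B aL' aR')"
    using fixed_mono[OF _ _ l2 l1] T T' by blast
  ultimately show ?thesis by simp
qed

lemma F_map_eq: "F_map k B aL aR = ((1 + fst (theta k B aL aR) * aL) / 2, (1 + snd (theta k B aL aR) * aR) / 2)"
  by (simp add: F_map_def case_prod_beta Let_def)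

theorem mainTheorem11:
  fixes k B :: real
  assumes "k \<ge> 1" and "B > 0"
  shows "(\<forall>aL aR aL' aR'.
            aL \<in> {0..1} \<and> aR \<in> {0..1} \<and> aL' \<in> {0..1} \<and> aR' \<in> {0..1} \<and>
            aL \<le> aL' \<and> aR \<le> aR' \<longrightarrow>
              fst (F_map k B aL aR) \<le> fst (F_map k B aL' aR') \<and>
              snd (F_map k B aL aR) \<le> snd (F_map k B aL' aR'))
       \<and> (\<forall>aL aR. aL \<in> {0..1} \<and> aR \<in> {0..1} \<and> sqrt (aL * aR) * B > 1 \<longrightarrow>
            1 - (1 - fst (theta k B aL aR)) * (1 - snd (theta k B aL aR)) * B\<^sup>2 * aL * aR > 0)"
proof (intro conjI allI impI)
  fix aL aR aL' aR' :: real
  assume h: "aL \<in> {0..1} \<and> aR \<in> {0..1} \<and> aL' \<in> {0..1} \<and> aR' \<in> {0..1} \<and> aL \<le> aL' \<and> aR \<le> aR'"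
  then have h0: "aL \<ge> 0" "aR \<ge> 0" "aL \<le> aL'" "aR \<le> aR'" by auto
  note M = theta_mono[OF assms h0]
  note N = theta_nonneg[OF assms h0(1,2)]
  have "fst (theta k B aL aR) * aL \<le> fst (theta k B aL' aR') * aL'"
    using M N h0 by (intro mult_mono) auto
  moreover have "snd (theta k B aL aR) * aR \<le> snd (theta k B aL' aR') * aR'"
    using M N h0 by (intro mult_mono) auto
  ultimately show "fst (F_map k B aL aR) \<le> fst (F_map k B aL' aR')"
    "snd (F_map k B aL aR) \<le> snd (F_map k B aL' aR')"
    by (simp_all add: F_map_eq)
next
  fix aL aR :: real
  assume h: "aL \<in> {0..1} \<and> aR \<in> {0..1} \<and> sqrt (aL * aR) * B > 1"
  then have h0: "aL \<ge> 0" "aR \<ge> 0" "sqrt (aL * aR) * B > 1" by auto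
  define A where "A = B * sqrt k * aR"
  define C where "C = B / sqrt k * aL"
  define tL where "tL = fst (theta k B aL aR)"
  define tR where "tR = snd (theta k B aL aR)"
  have T: "A > 0" "C > 0" "A * C = B^2 * aL * aR" "tL > 0"
     "1 - tL = exp (-(A * tR))" "1 - tR = exp (-(C * tL))" "G A C tL = tL"
    using theta_nontriv[OF assms h0] unfolding A_def C_def tL_def tR_def by auto
  have "A * C * exp (-(C * tL)) * exp (-(A * (1 - exp (-(C * tL))))) < 1"
    using fixed_deriv[OF T(1,2,4,7)] .
  moreover have "1 - exp (-(C * tL)) = tR" using T(6) by simp
  ultimately have "A * C * (1 - tR) * (1 - tL) < 1" using T(5,6) by simp
  then have "(1 - tL) * (1 - tR) * (B^2 * aL * aR) < 1" using T(3) by (simp add: algebra_simps)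
  then show "1 - (1 - tL) * (1 - tR) * B\<^sup>2 * aL * aR > 0" by (simp add: algebra_simps)
qed

end
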